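(* Let $\mathcal{X}=(\mathbf{x}_n)_{n=1}^\infty$ be a spreading sequence in a quasi-Banach space $\mathbb{X}$. Then $\mathcal{X}$ is bounded.
   Context: For a sequence $(\mathbf{x}_n)$ in $\mathbb{X}$, $\mathcal{N}\subseteq\mathbb{N}$ and an injective $\psi\colon\mathcal{N}\to\mathbb{N}$, $\psi$ is a translation if the assignment $\mathbf{x}_n\mapsto\mathbf{x}_{\psi(n)}$, $n\in\mathcal{N}$, defines a linear map on $\operatorname{span}(\mathbf{x}_n\colon n\in\mathcal{N})$ extending to an isomorphism $T_\psi$ from the closed linear span of $\{\mathbf{x}_n\colon n\in\mathcal{N}\}$ onto the closed linear span of $\{\mathbf{x}_n\colon n\in\psi(\mathcal{N})\}$. The sequence is spreading if every increasing map $\psi\colon\mathbb{N}\to\mathbb{N}$ is a translation. *)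

theory Defs
  imports "HOL-Analysis.Analysis"
begin

definition quasi_norm :: "('a::real_vector \<Rightarrow> real) \<Rightarrow> bool" where
  "quasi_norm q \<longleftrightarrow>
     (\<forall>x. 0 \<le> q x) \<and> (\<forall>x. q x = 0 \<longleftrightarrow> x = 0) \<and>
     (\<forall>t x. q (t *\<^sub>R x) = \<bar>t\<bar> * q x) \<and>
     (\<exists>\<kappa>\<ge>1. \<forall>x y. q (x + y) \<le> \<kappa> * (q x + q y))"

definition quasi_banach :: "('a::real_vector \<Rightarrow> real) \<Rightarrow> bool" where
  "quasi_banach q \<longleftrightarrow> quasi_norm q \<and>
     (\<forall>s::nat \<Rightarrow> 'a. (\<forall>e>0. \<exists>N. \<forall>m\<ge>N. \<forall>n\<ge>N. q (s m - s n) < e) \<longrightarrow>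
        (\<exists>l. (\<lambda>n. q (s n - l)) \<longlonglongrightarrow> 0))"

definition qclosure :: "('a::real_vector \<Rightarrow> real) \<Rightarrow> 'a set \<Rightarrow> 'a set" where
  "qclosure q S = {y. \<exists>s. (\<forall>n. s n \<in> S) \<and> (\<lambda>n. q (s n - y)) \<longlonglongrightarrow> 0}"

definition linear_on :: "'a::real_vector set \<Rightarrow> ('a \<Rightarrow> 'b::real_vector) \<Rightarrow> bool" where
  "linear_on A f \<longleftrightarrow> (\<forall>x\<in>A. \<forall>y\<in>A. f (x + y) = f x + f y) \<and>
                     (\<forall>c. \<forall>x\<in>A. f (c *\<^sub>R x) = c *\<^sub>R f x)"

definition closed_span :: "('a::real_vector \<Rightarrow> real) \<Rightarrow> (nat \<Rightarrow> 'a) \<Rightarrow> nat set \<Rightarrow> 'a set" where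
  "closed_span q x N = qclosure q (span (x ` N))"

definition translation :: "('a::real_vector \<Rightarrow> real) \<Rightarrow> (nat \<Rightarrow> 'a) \<Rightarrow> nat set \<Rightarrow> (nat \<Rightarrow> nat) \<Rightarrow> bool" where
  "translation q x N \<psi> \<longleftrightarrow> inj_on \<psi> N \<and>
     (\<exists>L. linear_on (span (x ` N)) L \<and> (\<forall>n\<in>N. L (x n) = x (\<psi> n)) \<and>
        (\<exists>T. (\<forall>v\<in>span (x ` N). T v = L v) \<and>
             linear_on (closed_span q x N) T \<and>
             bij_betw T (closed_span q x N) (closed_span q x (\<psi> ` N)) \<and>
             (\<exists>C>0. \<forall>v\<in>closed_span q x N. q (T v) \<le> C * q v \<and> q v \<le> C * q (T v))))"

definition spreading :: "('a::real_vector \<Rightarrow> real) \<Rightarrow> (nat \<Rightarrow> 'a) \<Rightarrow> bool" where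
  "spreading q x \<longleftrightarrow> (\<forall>\<psi>. strict_mono \<psi> \<longrightarrow> translation q x UNIV \<psi>)"

end

theory Submission
  imports Defs
begin

primrec psiseq :: "(nat \<Rightarrow> 'a) \<Rightarrow> ('a \<Rightarrow> real) \<Rightarrow> nat \<Rightarrow> nat" where
  "psiseq x q 0 = (SOME j. q (x j) \<ge> 1 * (q (x 0) + 1))"
| "psiseq x q (Suc m) = (SOME j. j > psiseq x q m \<and> q (x j) \<ge> real (Suc m + 1) * (q (x (Suc m)) + 1))"

theorem lemma2p4:
  fixes q :: "'a::real_vector \<Rightarrow> real" and x :: "nat \<Rightarrow> 'a"
  assumes "quasi_banach q" and "spreading q x"
  shows "\<exists>M. \<forall>n. q (x n) \<le> M"
proof (rule ccontr)
  assume nb: "\<not> (\<exists>M. \<forall>n. q (x n) \<le> M)"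
  have big: "\<exists>j>N. q (x j) \<ge> B" for N B
  proof -
    define M where "M = max B (Max ((\<lambda>n. q (x n)) ` {..N}))"
    obtain n where n: "q (x n) > M" using nb by (meson not_le)
    have "n > N"
    proof (rule ccontr)
      assume "\<not> N < n"
      then have "q (x n) \<le> Max ((\<lambda>n. q (x n)) ` {..N})" by (intro Max_ge) auto
      moreover have "Max ((\<lambda>n. q (x n)) ` {..N}) < q (x n)" using n unfolding M_def by linarith
      ultimately show False by linarith
    qed
    moreover have "q (x n) \<ge> B" using n unfolding M_def by auto
    ultimately show ?thesis by blast
  qed
  define \<psi> where "\<psi> = psiseq x q"
  have ex0: "\<exists>j. q (x j) \<ge> 1 * (q (x 0) + 1)" using big by blast
  have P0: "q (x (\<psi> 0)) \<ge> real (0 + 1) * (q (x 0) + 1)"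
    using someI_ex[OF ex0] unfolding \<psi>_def psiseq.simps by simp
  have PS: "\<psi> (Suc m) > \<psi> m \<and> q (x (\<psi> (Suc m))) \<ge> real (Suc m + 1) * (q (x (Suc m)) + 1)" for m
  proof -
    have ex: "\<exists>j. j > \<psi> m \<and> q (x j) \<ge> real (Suc m + 1) * (q (x (Suc m)) + 1)" using big by blast
    show ?thesis using someI_ex[OF ex] unfolding \<psi>_def psiseq.simps by simp
  qed
  have P: "q (x (\<psi> m)) \<ge> real (m + 1) * (q (x m) + 1)" for m
    using P0 PS by (cases m) auto
  have sm: "strict_mono \<psi>" using PS by (intro strict_monoI_Suc) auto
  then have "translation q x UNIV \<psi>" using assms(2) unfolding spreading_def by blast
  then obtain L T C where L: "\<forall>n. L (x n) = x (\<psi> n)"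
    and T: "\<forall>v\<in>span (x ` UNIV). T v = L v"
    and C: "C > 0" "\<forall>v\<in>closed_span q x UNIV. q (T v) \<le> C * q v \<and> q v \<le> C * q (T v)"
    unfolding translation_def by blast
  have q0: "q 0 = 0" using assms(1) unfolding quasi_banach_def quasi_norm_def by blast
  have qnn: "q v \<ge> 0" for v using assms(1) unfolding quasi_banach_def quasi_norm_def by blast
  have mem: "x m \<in> closed_span q x UNIV" for m
    unfolding closed_span_def qclosure_def
    by (rule CollectI, rule exI[of _ "\<lambda>_. x m"]) (auto simp: q0 span_base)
  have "x m \<in> span (x ` UNIV)" for m by (simp add: span_base)
  then have "q (x (\<psi> m)) \<le> C * q (x m)" for m using C(2) mem T L by metis
  obtain m :: nat where m: "real m \<ge> C" using real_arch_simple by blast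
  have "real (m + 1) * (q (x m) + 1) \<le> C * q (x m)"
    using P[of m] \<open>\<And>m. q (x (\<psi> m)) \<le> C * q (x m)\<close>[of m] by linarith
  moreover have "C * q (x m) \<le> real m * q (x m)" using m qnn[of "x m"] by (simp add: mult_right_mono)
  ultimately show False using qnn[of "x m"] by (simp add: algebra_simps)
qed

end
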